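(* Let $G$ be a finite connected multigraph (multiple edges and self-loops allowed) with $n\ge2$ vertices, having two distinct distinguished vertices $v_A,v_B$ of degree $3$ while every other vertex has degree $4$ (a connected two-point $\phi^4$ graph; $v_A,v_B$ are its external vertices, each carrying one external leg). Suppose $G$ contains no generalized tadpole subgraph. Then there exists an exhausting sequence of cuts for $G$, i.e. a sequence of vertex sets $\emptyset=A_0\subsetneq A_1\subsetneq\cdots\subsetneq A_{n-1}\subsetneq A_n=V(G)$ such that for every $p=1,\dots,n-1$, $(A_p,B_p:=V(G)\setminus A_p)$ is an $(A,B)$-cut of $G$.
   Context: A set $S$ of vertices of $G$ is connected if the subgraph consisting of the vertices of $S$ and all lines of $G$ with both ends in $S$ (its inner lines) is connected. For a connected vertex set $S$, its external half-lines are the half-lines (including external legs of $v_A,v_B$) at vertices of $S$ that do not belong to inner lines of $S$. A generalized tadpole subgraph is a connected vertex set $S$ with exactly two external half-lines, both attached to the same vertex of $S$. An $(A,B)$-cut of $G$ is a partition of the vertex set of $G$ into two sets $A$ and $B$ with $v_A\in A$, $v_B\in B$, and both $A$ and $B$ connected. *)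

theory Defs
  imports Main
begin

text \<open>A finite multigraph is given by a vertex set V, a line set E and two end maps
  src, tgt (a self-loop has src e = tgt e). Half-lines are pairs (e, b) with b selecting
  an end of e; the two external vertices vA, vB each carry one external leg.\<close>

datatype ('v, 'e) halfline = Internal 'e bool | Leg 'v

definition multigraph :: "'v set \<Rightarrow> 'e set \<Rightarrow> ('e \<Rightarrow> 'v) \<Rightarrow> ('e \<Rightarrow> 'v) \<Rightarrow> bool" where
  "multigraph V E src tgt \<longleftrightarrow> finite V \<and> finite E \<and> (\<forall>e\<in>E. src e \<in> V \<and> tgt e \<in> V)"

fun attach :: "('e \<Rightarrow> 'v) \<Rightarrow> ('e \<Rightarrow> 'v) \<Rightarrow> ('v, 'e) halfline \<Rightarrow> 'v" where
  "attach src tgt (Internal e b) = (if b then src e else tgt e)"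
| "attach src tgt (Leg v) = v"

text \<open>Degree of a vertex: number of line half-lines at it (a self-loop counts twice).\<close>
definition degree :: "'e set \<Rightarrow> ('e \<Rightarrow> 'v) \<Rightarrow> ('e \<Rightarrow> 'v) \<Rightarrow> 'v \<Rightarrow> nat" where
  "degree E src tgt v = card {(e, b). e \<in> E \<and> attach src tgt (Internal e b) = v}"

definition inner_adj :: "'e set \<Rightarrow> ('e \<Rightarrow> 'v) \<Rightarrow> ('e \<Rightarrow> 'v) \<Rightarrow> 'v set \<Rightarrow> ('v \<times> 'v) set" where
  "inner_adj E src tgt S = {(x, y). \<exists>e\<in>E. src e \<in> S \<and> tgt e \<in> S \<and>
       ((x = src e \<and> y = tgt e) \<or> (x = tgt e \<and> y = src e))}"

definition connected_set :: "'e set \<Rightarrow> ('e \<Rightarrow> 'v) \<Rightarrow> ('e \<Rightarrow> 'v) \<Rightarrow> 'v set \<Rightarrow> bool" where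
  "connected_set E src tgt S \<longleftrightarrow> S \<noteq> {} \<and>
     (\<forall>x\<in>S. \<forall>y\<in>S. (x, y) \<in> (inner_adj E src tgt S)\<^sup>*)"

definition ext_halflines :: "'e set \<Rightarrow> ('e \<Rightarrow> 'v) \<Rightarrow> ('e \<Rightarrow> 'v) \<Rightarrow> 'v \<Rightarrow> 'v \<Rightarrow> 'v set
     \<Rightarrow> ('v, 'e) halfline set" where
  "ext_halflines E src tgt vA vB S =
     {Internal e b | e b. e \<in> E \<and> attach src tgt (Internal e b) \<in> S \<and> \<not> (src e \<in> S \<and> tgt e \<in> S)}
     \<union> {Leg v | v. v \<in> {vA, vB} \<and> v \<in> S}"

definition generalized_tadpole :: "'e set \<Rightarrow> ('e \<Rightarrow> 'v) \<Rightarrow> ('e \<Rightarrow> 'v) \<Rightarrow> 'v \<Rightarrow> 'v \<Rightarrow> 'v set \<Rightarrow> bool" where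
  "generalized_tadpole E src tgt vA vB S \<longleftrightarrow> connected_set E src tgt S \<and>
     card (ext_halflines E src tgt vA vB S) = 2 \<and>
     (\<exists>v\<in>S. \<forall>h\<in>ext_halflines E src tgt vA vB S. attach src tgt h = v)"

definition AB_cut :: "'v set \<Rightarrow> 'e set \<Rightarrow> ('e \<Rightarrow> 'v) \<Rightarrow> ('e \<Rightarrow> 'v) \<Rightarrow> 'v \<Rightarrow> 'v \<Rightarrow> 'v set \<Rightarrow> 'v set \<Rightarrow> bool" where
  "AB_cut V E src tgt vA vB A B \<longleftrightarrow> A \<union> B = V \<and> A \<inter> B = {} \<and> vA \<in> A \<and> vB \<in> B \<and>
     connected_set E src tgt A \<and> connected_set E src tgt B"

definition exhausting_sequence_of_cuts ::
  "'v set \<Rightarrow> 'e set \<Rightarrow> ('e \<Rightarrow> 'v) \<Rightarrow> ('e \<Rightarrow> 'v) \<Rightarrow> 'v \<Rightarrow> 'v \<Rightarrow> (nat \<Rightarrow> 'v set) \<Rightarrow> bool" where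
  "exhausting_sequence_of_cuts V E src tgt vA vB A \<longleftrightarrow>
     A 0 = {} \<and> A (card V) = V \<and> (\<forall>i < card V. A i \<subset> A (Suc i)) \<and>
     (\<forall>p. 1 \<le> p \<and> p \<le> card V - 1 \<longrightarrow> AB_cut V E src tgt vA vB (A p) (V - A p))"

end

theory Submission imports Defs begin

definition adj :: "'e set \<Rightarrow> ('e \<Rightarrow> 'v) \<Rightarrow> ('e \<Rightarrow> 'v) \<Rightarrow> 'v \<Rightarrow> 'v \<Rightarrow> bool" where
  "adj E src tgt a w \<longleftrightarrow> (\<exists>e\<in>E. (src e = a \<and> tgt e = w) \<or> (src e = w \<and> tgt e = a))"

lemma inner_adj_iff: "(a, w) \<in> inner_adj E src tgt S \<longleftrightarrow> a \<in> S \<and> w \<in> S \<and> adj E src tgt a w"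
  unfolding inner_adj_def adj_def by auto

lemma adj_sym: "adj E src tgt a w \<Longrightarrow> adj E src tgt w a"
  unfolding adj_def by auto

lemma rt_sym: "(a, w) \<in> (inner_adj E src tgt S)\<^sup>* \<Longrightarrow> (w, a) \<in> (inner_adj E src tgt S)\<^sup>*"
proof (induction rule: rtrancl_induct)
  case base then show ?case by simp
next
  case (step y z)
  then have "(z, y) \<in> inner_adj E src tgt S" by (auto simp: inner_adj_iff adj_sym)
  then show ?case using step(3) by (meson converse_rtrancl_into_rtrancl)
qed

lemma rt_mono: "S \<subseteq> S' \<Longrightarrow> (a, w) \<in> (inner_adj E src tgt S)\<^sup>* \<Longrightarrow> (a, w) \<in> (inner_adj E src tgt S')\<^sup>*"
proof -
  assume "S \<subseteq> S'"
  then have "inner_adj E src tgt S \<subseteq> inner_adj E src tgt S'" by (auto simp: inner_adj_iff)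
  then show "(a, w) \<in> (inner_adj E src tgt S)\<^sup>* \<Longrightarrow> (a, w) \<in> (inner_adj E src tgt S')\<^sup>*"
    using rtrancl_mono by blast
qed

lemma rt_in: "(a, w) \<in> (inner_adj E src tgt S)\<^sup>* \<Longrightarrow> a \<in> S \<Longrightarrow> w \<in> S"
  by (induction rule: rtrancl_induct) (auto simp: inner_adj_iff)

lemma conn_root:
  assumes "a \<in> S" "\<forall>y\<in>S. (a, y) \<in> (inner_adj E src tgt S)\<^sup>*"
  shows "connected_set E src tgt S"
  unfolding connected_set_def using assms
  by (meson empty_iff rt_sym rtrancl_trans)

lemma conn_D: "connected_set E src tgt S \<Longrightarrow> x \<in> S \<Longrightarrow> y \<in> S \<Longrightarrow> (x, y) \<in> (inner_adj E src tgt S)\<^sup>*"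
  unfolding connected_set_def by blast

lemma crossing:
  assumes "connected_set E src tgt W" "T \<subseteq> W" "a \<in> T" "b \<in> W" "b \<notin> T"
  shows "\<exists>x w. x \<in> T \<and> w \<in> W \<and> w \<notin> T \<and> adj E src tgt x w"
proof -
  have "(a, b) \<in> (inner_adj E src tgt W)\<^sup>*" using assms conn_D by (metis subsetD)
  then show ?thesis using assms(5)
  proof (induction rule: rtrancl_induct)
    case base then show ?case using assms by simp
  next
    case (step y z)
    show ?case
    proof (cases "y \<in> T")
      case True then show ?thesis using step by (auto simp: inner_adj_iff)
    next
      case False then show ?thesis using step by blast
    qed
  qed
qed

definition reach :: "'e set \<Rightarrow> ('e \<Rightarrow> 'v) \<Rightarrow> ('e \<Rightarrow> 'v) \<Rightarrow> 'v set \<Rightarrow> 'v \<Rightarrow> 'v set" where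
  "reach E src tgt S y = {z. (y, z) \<in> (inner_adj E src tgt S)\<^sup>*}"

lemma reach_sub: "y \<in> S \<Longrightarrow> reach E src tgt S y \<subseteq> S"
  unfolding reach_def using rt_in by fast

lemma reach_closed: "z \<in> reach E src tgt S y \<Longrightarrow> w \<in> S \<Longrightarrow> z \<in> S \<Longrightarrow> adj E src tgt z w \<Longrightarrow> w \<in> reach E src tgt S y"
  unfolding reach_def by (auto simp: inner_adj_iff intro: rtrancl_into_rtrancl)

lemma reach_conn:
  assumes "y \<in> S" shows "connected_set E src tgt (reach E src tgt S y)"
proof -
  let ?R = "reach E src tgt S y"
  have "(y, z) \<in> (inner_adj E src tgt ?R)\<^sup>*" if "(y, z) \<in> (inner_adj E src tgt S)\<^sup>*" for z
    using that
  proof (induction rule: rtrancl_induct)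
    case base then show ?case by simp
  next
    case (step u z)
    have "u \<in> ?R" "z \<in> ?R" using step unfolding reach_def by (auto intro: rtrancl_into_rtrancl)
    then have "(u, z) \<in> inner_adj E src tgt ?R" using step by (auto simp: inner_adj_iff)
    then show ?case using step by (meson rtrancl_into_rtrancl)
  qed
  then show ?thesis
    by (intro conn_root[of y]) (auto simp: reach_def)
qed


definition hend :: "('e \<Rightarrow> 'v) \<Rightarrow> ('e \<Rightarrow> 'v) \<Rightarrow> 'e \<Rightarrow> bool \<Rightarrow> 'v" where
  "hend src tgt e b = (if b then src e else tgt e)"

definition HL :: "'e set \<Rightarrow> ('e \<Rightarrow> 'v) \<Rightarrow> ('e \<Rightarrow> 'v) \<Rightarrow> 'v \<Rightarrow> ('e \<times> bool) set" where
  "HL E src tgt x = {(e, b). e \<in> E \<and> hend src tgt e b = x}"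

definition XS :: "'e set \<Rightarrow> ('e \<Rightarrow> 'v) \<Rightarrow> ('e \<Rightarrow> 'v) \<Rightarrow> 'v set \<Rightarrow> ('e \<times> bool) set" where
  "XS E src tgt S = {(e, b). e \<in> E \<and> hend src tgt e b \<in> S \<and> \<not> (src e \<in> S \<and> tgt e \<in> S)}"

lemma degree_HL: "degree E src tgt x = card (HL E src tgt x)"
  unfolding degree_def HL_def hend_def by simp

lemma handshake:
  assumes "finite E" "finite S"
  shows "(\<Sum>x\<in>S. card (HL E src tgt x)) = 2 * card {e\<in>E. src e \<in> S \<and> tgt e \<in> S} + card (XS E src tgt S)"
proof -
  have fin: "finite (HL E src tgt x)" for x
    by (rule finite_subset[of _ "E \<times> UNIV"]) (auto simp: HL_def assms)
  have "(\<Sum>x\<in>S. card (HL E src tgt x)) = card (\<Union>x\<in>S. HL E src tgt x)"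
    by (rule card_UN_disjoint[symmetric]) (auto simp: assms fin, auto simp: HL_def)
  also have "(\<Union>x\<in>S. HL E src tgt x) = ({e\<in>E. src e \<in> S \<and> tgt e \<in> S} \<times> UNIV) \<union> XS E src tgt S"
    by (auto simp: HL_def XS_def hend_def split: if_splits)
  also have "card \<dots> = card ({e\<in>E. src e \<in> S \<and> tgt e \<in> S} \<times> (UNIV::bool set)) + card (XS E src tgt S)"
    by (rule card_Un_disjoint) (auto simp: XS_def hend_def assms split: if_splits
        intro: finite_subset[of _ "E \<times> UNIV"])
  finally show ?thesis by (simp add: card_cartesian_product)
qed


locale phi4 =
  fixes V :: "'v set" and E :: "'e set" and src tgt :: "'e \<Rightarrow> 'v" and vA vB :: 'v
  assumes mg: "multigraph V E src tgt"
    and conn: "connected_set E src tgt V"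
    and vA: "vA \<in> V" and vB: "vB \<in> V" and vAB: "vA \<noteq> vB"
    and degA: "degree E src tgt vA = 3" and degB: "degree E src tgt vB = 3"
    and deg4: "\<forall>v\<in>V - {vA, vB}. degree E src tgt v = 4"
    and notad: "\<not> (\<exists>S \<subseteq> V. generalized_tadpole E src tgt vA vB S)"
begin

lemma par4: "4 * a = 2 * b + (c::nat) \<Longrightarrow> even c" by presburger

lemma ev2: "even (c::nat) \<Longrightarrow> c \<noteq> 0 \<Longrightarrow> c \<ge> 2" by presburger
lemma ev2': "even (c::nat) \<Longrightarrow> 1 \<le> c \<Longrightarrow> c \<le> 2 \<Longrightarrow> c = 2" by presburger

lemma finV: "finite V" and finE: "finite E" and endsV: "e \<in> E \<Longrightarrow> src e \<in> V \<and> tgt e \<in> V"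
  using mg unfolding multigraph_def by auto

lemma adj_V: "adj E src tgt a w \<Longrightarrow> a \<in> V \<and> w \<in> V"
  unfolding adj_def using endsV by auto

lemma no_closed:
  assumes KV: "K \<subseteq> V" and k0: "k0 \<in> K" and nA: "vA \<notin> K" and nB: "vB \<notin> K"
    and v: "v \<in> V" "v \<notin> K" and Kc: "connected_set E src tgt K"
    and cl: "\<forall>a w. a \<in> K \<longrightarrow> adj E src tgt a w \<longrightarrow> w \<in> K \<or> w = v"
    and u: "u \<in> V" "u \<notin> K" "u \<noteq> v"
  shows False
proof -
  let ?S = "insert v K"
  have finK: "finite K" using KV finV finite_subset by blast
  obtain a w where aw: "a \<in> K" "w \<in> V" "w \<notin> K" "adj E src tgt a w"
    using crossing[OF conn KV k0 v] by blast
  then have av: "adj E src tgt a v" using cl by blast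
  have Sc: "connected_set E src tgt ?S"
  proof (rule conn_root[of a])
    show "a \<in> ?S" using aw by simp
    show "\<forall>y\<in>?S. (a, y) \<in> (inner_adj E src tgt ?S)\<^sup>*"
    proof
      fix y assume "y \<in> ?S"
      then show "(a, y) \<in> (inner_adj E src tgt ?S)\<^sup>*"
      proof
        assume "y = v"
        then have "(a, y) \<in> inner_adj E src tgt ?S" using av aw by (auto simp: inner_adj_iff)
        then show ?thesis by blast
      next
        assume "y \<in> K"
        then show ?thesis using conn_D[OF Kc aw(1)] rt_mono[of K ?S] by blast
      qed
    qed
  qed
  have SV: "?S \<subseteq> V" using KV v by auto
  obtain a2 w2 where aw2: "a2 \<in> ?S" "w2 \<in> V" "w2 \<notin> ?S" "adj E src tgt a2 w2"
    using crossing[OF conn SV, of v u] u v by blast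
  then have a2v: "a2 = v" using cl by blast
  let ?XK = "XS E src tgt K" and ?XS = "XS E src tgt ?S"
  have finX: "finite (XS E src tgt T)" for T
    by (rule finite_subset[of _ "E \<times> UNIV"]) (auto simp: XS_def finE)
  have finH: "finite (HL E src tgt x)" for x
    by (rule finite_subset[of _ "E \<times> UNIV"]) (auto simp: HL_def finE)
  have "(\<Sum>x\<in>K. card (HL E src tgt x)) = (\<Sum>x\<in>K. 4)"
    by (rule sum.cong) (use KV nA nB deg4 in \<open>auto simp: degree_HL\<close>)
  then have "4 * card K = 2 * card {e\<in>E. src e \<in> K \<and> tgt e \<in> K} + card ?XK"
    using handshake[OF finE finK, of src tgt] by simp
  then have evK: "even (card ?XK)" by (rule par4)
  have "?XK \<noteq> {}"
  proof -
    obtain e where e: "e \<in> E" "(src e = a \<and> tgt e = v) \<or> (src e = v \<and> tgt e = a)"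
      using av unfolding adj_def by blast
    then show ?thesis using aw(1) v(2)
      by (auto simp: XS_def hend_def intro!: exI[of _ "(e, src e = a)"])
  qed
  then have XK2: "card ?XK \<ge> 2" using evK finX[of K] by (intro ev2) auto
  have othK: "hend src tgt e (\<not> b) \<in> K \<or> hend src tgt e (\<not> b) = v" if "e \<in> E" "hend src tgt e b \<in> K" for e b
  proof -
    have "adj E src tgt (hend src tgt e b) (hend src tgt e (\<not> b))"
      using that unfolding adj_def hend_def by auto
    then show ?thesis using cl that by blast
  qed
  have XSH: "?XS \<subseteq> HL E src tgt v"
  proof
    fix p assume p: "p \<in> ?XS"
    obtain e b where peb: "p = (e, b)" by (cases p)
    have "hend src tgt e b = v"
    proof (rule ccontr)
      assume "hend src tgt e b \<noteq> v"
      then have "hend src tgt e b \<in> K" using p peb by (auto simp: XS_def)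
      then show False using othK[of e b] p peb by (auto simp: XS_def hend_def split: if_splits)
    qed
    then show "p \<in> HL E src tgt v" using p peb by (auto simp: XS_def HL_def)
  qed
  let ?phi = "\<lambda>(e::'e, b::bool). (e, \<not> b)"
  have phiH: "?phi ` ?XK \<subseteq> HL E src tgt v"
  proof
    fix q assume "q \<in> ?phi ` ?XK"
    then obtain e b where eb: "(e, b) \<in> ?XK" "q = (e, \<not> b)" by auto
    then have "hend src tgt e b \<in> K" "e \<in> E" by (auto simp: XS_def)
    then show "q \<in> HL E src tgt v" using othK[of e b] eb
      by (auto simp: XS_def HL_def hend_def split: if_splits)
  qed
  have phidisj: "?phi ` ?XK \<inter> ?XS = {}"
  proof (rule ccontr)
    assume "?phi ` ?XK \<inter> ?XS \<noteq> {}"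
    then obtain e b where eb: "(e, b) \<in> ?XK" "(e, \<not> b) \<in> ?XS" by auto
    then have "hend src tgt e b \<in> K" "e \<in> E" by (auto simp: XS_def)
    then show False using othK[of e b] eb
      by (auto simp: XS_def hend_def split: if_splits)
  qed
  have injphi: "inj ?phi" by (auto simp: inj_def)
  have "card ?XS + card ?XK = card (?XS \<union> ?phi ` ?XK)"
    using card_Un_disjoint[OF finX finite_imageI[OF finX], of ?S ?phi K] phidisj
      card_image[OF inj_on_subset[OF injphi]] by (simp add: Int_commute)
  also have "\<dots> \<le> card (HL E src tgt v)"
    by (rule card_mono[OF finH]) (use XSH phiH in auto)
  finally have cnt: "card ?XS + card ?XK \<le> degree E src tgt v" by (simp add: degree_HL)
  have XSne: "?XS \<noteq> {}"
  proof -
    obtain e where e: "e \<in> E" "(src e = v \<and> tgt e = w2) \<or> (src e = w2 \<and> tgt e = v)"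
      using aw2 a2v unfolding adj_def by blast
    then show ?thesis using aw2
      by (auto simp: XS_def hend_def intro!: exI[of _ "(e, src e = v)"])
  qed
  then have XS1: "card ?XS \<ge> 1" using finX[of ?S] by (simp add: Suc_leI card_gt_0_iff)
  have XSc: "ext_halflines E src tgt vA vB ?S =
      (\<lambda>(e, b). Internal e b) ` ?XS \<union> (if v \<in> {vA, vB} then {Leg v} else {})"
    using nA nB by (auto simp: ext_halflines_def XS_def hend_def)
  have attachv: "\<forall>h\<in>ext_halflines E src tgt vA vB ?S. attach src tgt h = v"
    unfolding XSc using XSH by (auto simp: HL_def hend_def split: if_splits)
  have injI: "inj (\<lambda>(e, b). (Internal e b :: ('v, 'e) halfline))" by (auto simp: inj_def)
  have cardI: "card ((\<lambda>(e, b). (Internal e b :: ('v, 'e) halfline)) ` ?XS) = card ?XS"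
    using card_image[OF inj_on_subset[OF injI]] by blast
  have "card (ext_halflines E src tgt vA vB ?S) = 2"
  proof (cases "v \<in> {vA, vB}")
    case True
    then have "degree E src tgt v = 3" using degA degB by auto
    then have "card ?XS = 1" using cnt XK2 XS1 by linarith
    moreover have "card (ext_halflines E src tgt vA vB ?S) = card ?XS + 1"
      unfolding XSc using True cardI finX[of ?S] by (subst card_Un_disjoint) auto
    ultimately show ?thesis by simp
  next
    case False
    then have d4: "degree E src tgt v = 4" using deg4 v by auto
    have "(\<Sum>x\<in>?S. card (HL E src tgt x)) = (\<Sum>x\<in>?S. 4)"
      by (rule sum.cong) (use KV nA nB deg4 v False in \<open>auto simp: degree_HL\<close>)
    then have "4 * card ?S = 2 * card {e\<in>E. src e \<in> ?S \<and> tgt e \<in> ?S} + card ?XS"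
      using handshake[OF finE, of ?S src tgt] finK by simp
    then have "even (card ?XS)" by (rule par4)
    moreover have "card ?XS \<le> 2" using cnt XK2 d4 by linarith
    ultimately have "card ?XS = 2" using XS1 ev2' by blast
    then show ?thesis unfolding XSc using False cardI by simp
  qed
  then have "generalized_tadpole E src tgt vA vB ?S"
    unfolding generalized_tadpole_def using Sc attachv by blast
  then show False using notad SV by blast
qed

end

context phi4 begin

lemma base_conn: "connected_set E src tgt (V - {vA})"
proof (rule ccontr)
  assume nc: "\<not> ?thesis"
  have "\<exists>y\<in>V - {vA}. (vB, y) \<notin> (inner_adj E src tgt (V - {vA}))\<^sup>*"
    using conn_root[of vB "V - {vA}" E src tgt] nc vB vAB by blast
  then obtain y where y: "y \<in> V" "y \<noteq> vA" "(vB, y) \<notin> (inner_adj E src tgt (V - {vA}))\<^sup>*" by blast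
  let ?K = "reach E src tgt (V - {vA}) y"
  have KV: "?K \<subseteq> V - {vA}" using reach_sub[of y "V - {vA}"] y by blast
  have yK: "y \<in> ?K" by (simp add: reach_def)
  have nB: "vB \<notin> ?K" using y(3) unfolding reach_def by (auto dest: rt_sym)
  show False
  proof (rule no_closed[of ?K y vA vB])
    show "connected_set E src tgt ?K" using reach_conn[of y "V - {vA}"] y by simp
    show "\<forall>a w. a \<in> ?K \<longrightarrow> adj E src tgt a w \<longrightarrow> w \<in> ?K \<or> w = vA"
    proof (intro allI impI)
      fix a w assume "a \<in> ?K" "adj E src tgt a w"
      then show "w \<in> ?K \<or> w = vA" using reach_closed[of a E src tgt "V - {vA}" y w] adj_V KV by blast
    qed
  qed (use KV yK nB vA vB vAB in auto)
qed

lemma step_lemma: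
  assumes AB: "A \<union> B = V" "A \<inter> B = {}" "vA \<in> A" "vB \<in> B"
    and Bc: "connected_set E src tgt B" and Bn: "B \<noteq> {vB}"
  shows "\<exists>x\<in>B - {vB}. (\<exists>a\<in>A. adj E src tgt a x) \<and> connected_set E src tgt (B - {x})"
proof (rule ccontr)
  assume neg: "\<not> ?thesis"
  define Q where "Q K \<longleftrightarrow> (\<exists>v\<in>B. v \<notin> K \<and> K \<subseteq> B \<and> K \<noteq> {} \<and> vB \<notin> K \<and> connected_set E src tgt K
      \<and> (\<forall>a w. a \<in> K \<longrightarrow> adj E src tgt a w \<longrightarrow> w \<in> K \<or> w = v \<or> w \<in> A))" for K
  have comp: "Q (reach E src tgt (B - {x}) y)"
    if xy: "x \<in> B" "y \<in> B" "y \<noteq> x" "(vB, y) \<notin> (inner_adj E src tgt (B - {x}))\<^sup>*" for x y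
  proof -
    let ?K = "reach E src tgt (B - {x}) y"
    have KB: "?K \<subseteq> B - {x}" using reach_sub[of y "B - {x}"] xy by blast
    have yK: "y \<in> ?K" by (simp add: reach_def)
    have nB: "vB \<notin> ?K" using xy(4) unfolding reach_def by (auto dest: rt_sym)
    have cl: "\<forall>a w. a \<in> ?K \<longrightarrow> adj E src tgt a w \<longrightarrow> w \<in> ?K \<or> w = x \<or> w \<in> A"
    proof (intro allI impI)
      fix a w assume "a \<in> ?K" "adj E src tgt a w"
      then show "w \<in> ?K \<or> w = x \<or> w \<in> A"
        using reach_closed[of a E src tgt "B - {x}" y w] adj_V KB AB(1) by blast
    qed
    show ?thesis unfolding Q_def
      using xy KB yK nB cl reach_conn[of y "B - {x}" E src tgt] by blast
  qed
  have init: "\<exists>K. Q K"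
  proof -
    obtain y where y: "y \<in> B" "y \<noteq> vB" using Bn AB(4) by blast
    have "(vB, y) \<notin> (inner_adj E src tgt (B - {vB}))\<^sup>*"
    proof
      assume "(vB, y) \<in> (inner_adj E src tgt (B - {vB}))\<^sup>*"
      then have "(y, vB) \<in> (inner_adj E src tgt (B - {vB}))\<^sup>*" by (rule rt_sym)
      then have "vB \<in> B - {vB}" using rt_in y by fast
      then show False by simp
    qed
    then show ?thesis using comp[of vB y] y AB by blast
  qed
  have desc: "\<exists>K'. Q K' \<and> card K' < card K" if QK: "Q K" for K
  proof -
    obtain v where v: "v \<in> B" "v \<notin> K" "K \<subseteq> B" "K \<noteq> {}" "vB \<notin> K" "connected_set E src tgt K"
      and cl: "\<forall>a w. a \<in> K \<longrightarrow> adj E src tgt a w \<longrightarrow> w \<in> K \<or> w = v \<or> w \<in> A"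
      using QK unfolding Q_def by blast
    have BV: "B \<subseteq> V" using AB by blast
    show ?thesis
    proof (cases "\<exists>a\<in>K. \<exists>w\<in>A. adj E src tgt a w")
      case False
      obtain k0 where k0: "k0 \<in> K" using v by blast
      have "False"
      proof (rule no_closed[of K k0 v vA])
        show "\<forall>a w. a \<in> K \<longrightarrow> adj E src tgt a w \<longrightarrow> w \<in> K \<or> w = v" using cl False by blast
      qed (use v k0 BV AB in auto)
      then show ?thesis by blast
    next
      case True
      then obtain x w0 where x: "x \<in> K" "w0 \<in> A" "adj E src tgt x w0" by blast
      have xB: "x \<in> B - {vB}" using x v by blast
      have "\<exists>a\<in>A. adj E src tgt a x" using x adj_sym[OF x(3)] by blast
      then have nc: "\<not> connected_set E src tgt (B - {x})" using neg xB by blast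
      have "\<exists>y\<in>B - {x}. (vB, y) \<notin> (inner_adj E src tgt (B - {x}))\<^sup>*"
        using conn_root[of vB "B - {x}" E src tgt] nc xB AB(4) by blast
      then obtain y where y: "y \<in> B" "y \<noteq> x" "(vB, y) \<notin> (inner_adj E src tgt (B - {x}))\<^sup>*" by blast
      let ?K' = "reach E src tgt (B - {x}) y"
      have QK': "Q ?K'" using comp[of x y] y xB by blast
      let ?T = "reach E src tgt (B - K) vB"
      have TB: "?T \<subseteq> B - K" using reach_sub[of vB "B - K"] AB(4) v(5) by blast
      have vBT: "vB \<in> ?T" by (simp add: reach_def)
      have vT: "v \<in> ?T"
      proof -
        obtain a' w' where aw: "a' \<in> ?T" "w' \<in> B" "w' \<notin> ?T" "adj E src tgt a' w'"
          using crossing[OF Bc _ vBT, of x] TB x v by blast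
        have "w' \<in> K"
        proof (rule ccontr)
          assume "w' \<notin> K"
          then have "w' \<in> ?T" using reach_closed[of a' E src tgt "B - K" vB w'] aw TB by blast
          then show False using aw by blast
        qed
        then have "a' \<in> K \<or> a' = v \<or> a' \<in> A" using cl aw(4) adj_sym[OF aw(4)] by blast
        then show ?thesis using aw(1) TB AB(2) by blast
      qed
      have BT: "B - K \<subseteq> ?T"
      proof (rule ccontr)
        assume "\<not> ?thesis"
        then obtain z where z: "z \<in> B" "z \<notin> K" "z \<notin> ?T" by blast
        have sub: "?T \<union> K \<subseteq> B" using TB v by blast
        obtain a' w' where aw: "a' \<in> ?T \<union> K" "w' \<in> B" "w' \<notin> ?T \<union> K" "adj E src tgt a' w'"
          using crossing[OF Bc sub, of vB z] vBT z by blast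
        show False
        proof (cases "a' \<in> K")
          case True
          then have "w' = v" using cl aw AB(2) by blast
          then show False using aw vT by blast
        next
          case False
          then have "a' \<in> ?T" using aw by blast
          then have "w' \<in> ?T" using reach_closed[of a' E src tgt "B - K" vB w'] aw TB by blast
          then show False using aw by blast
        qed
      qed
      have Tx: "z \<in> ?T \<Longrightarrow> (vB, z) \<in> (inner_adj E src tgt (B - {x}))\<^sup>*" for z
        using rt_mono[of "B - K" "B - {x}" vB z E src tgt] x unfolding reach_def by blast
      have K'K: "?K' \<subseteq> K - {x}"
      proof
        fix z assume z: "z \<in> ?K'"
        have zB: "z \<in> B - {x}" using reach_sub[of y "B - {x}" E src tgt] y z by blast
        have "z \<in> K"
        proof (rule ccontr)
          assume "z \<notin> K"
          then have "(vB, z) \<in> (inner_adj E src tgt (B - {x}))\<^sup>*" using Tx BT zB by blast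
          moreover have "(z, y) \<in> (inner_adj E src tgt (B - {x}))\<^sup>*" using z rt_sym[of y z E src tgt "B - {x}"] unfolding reach_def by blast
          ultimately show False using y(3) by (meson rtrancl_trans)
        qed
        then show "z \<in> K - {x}" using zB by blast
      qed
      have "finite K" using finite_subset[OF _ finV, of K] v(3) BV by blast
      moreover have "?K' \<subset> K" using K'K x(1) by blast
      ultimately have "card ?K' < card K" by (rule psubset_card_mono)
      then show ?thesis using QK' by blast
    qed
  qed
  obtain K0 where K0: "Q K0" using init by blast
  obtain K where K: "Q K" "\<forall>K'. Q K' \<longrightarrow> card K \<le> card K'"
    using ex_has_least_nat[of Q K0 card, OF K0] by blast
  obtain K' where "Q K'" "card K' < card K" using desc[OF K(1)] by blast
  then show False using K(2) by force
qed

end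

lemma conn_insert:
  assumes "connected_set E src tgt A" "a \<in> A" "adj E src tgt a x"
  shows "connected_set E src tgt (insert x A)"
proof (rule conn_root[of a])
  show "a \<in> insert x A" using assms by simp
  show "\<forall>y\<in>insert x A. (a, y) \<in> (inner_adj E src tgt (insert x A))\<^sup>*"
  proof
    fix y assume "y \<in> insert x A"
    then show "(a, y) \<in> (inner_adj E src tgt (insert x A))\<^sup>*"
    proof
      assume "y = x"
      then have "(a, y) \<in> inner_adj E src tgt (insert x A)" using assms by (auto simp: inner_adj_iff)
      then show ?thesis by blast
    next
      assume "y \<in> A"
      then show ?thesis using conn_D[OF assms(1) assms(2)] rt_mono[of A "insert x A"] by blast
    qed
  qed
qed

context phi4 begin

lemma seq:
  "1 \<le> k \<Longrightarrow> k \<le> card V - 1 \<Longrightarrow> \<exists>f. f 0 = {} \<and> (\<forall>i<k. f i \<subset> f (Suc i)) \<and>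
     (\<forall>p. 1 \<le> p \<and> p \<le> k \<longrightarrow> AB_cut V E src tgt vA vB (f p) (V - f p)) \<and> card (f k) = k"
proof (induction k rule: dec_induct)
  case base
  let ?f = "\<lambda>i::nat. if i = 0 then {} else {vA}"
  have c1: "connected_set E src tgt {vA}" by (rule conn_root[of vA]) auto
  have "AB_cut V E src tgt vA vB {vA} (V - {vA})"
    unfolding AB_cut_def using vA vB vAB c1 base_conn by auto
  then show ?case
    by (intro exI[of _ ?f]) (auto simp: le_Suc_eq)
next
  case (step k)
  obtain f where f: "f 0 = {}" "\<forall>i<k. f i \<subset> f (Suc i)"
    "\<forall>p. 1 \<le> p \<and> p \<le> k \<longrightarrow> AB_cut V E src tgt vA vB (f p) (V - f p)" "card (f k) = k"
    using step by auto
  have cut: "AB_cut V E src tgt vA vB (f k) (V - f k)" using f(3) step by auto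
  then have AV: "f k \<subseteq> V" and vAk: "vA \<in> f k" and vBk: "vB \<notin> f k"
    and Ac: "connected_set E src tgt (f k)" and Bc: "connected_set E src tgt (V - f k)"
    unfolding AB_cut_def by auto
  have "card (V - f k) = card V - k" using card_Diff_subset[OF finite_subset[OF AV finV] AV] f(4) by simp
  then have "card (V - f k) \<ge> 2" using step by linarith
  then have Bn: "V - f k \<noteq> {vB}" by auto
  have u: "f k \<union> (V - f k) = V" using AV by blast
  have d: "f k \<inter> (V - f k) = {}" by blast
  have vBV: "vB \<in> V - f k" using vB vBk by blast
  obtain x where x0: "x \<in> V - f k - {vB}" "\<exists>a\<in>f k. adj E src tgt a x"
    and Bx: "connected_set E src tgt (V - f k - {x})"
    using step_lemma[OF u d vAk vBV Bc Bn] by blast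
  obtain a where x: "x \<in> V - f k" "x \<noteq> vB" "a \<in> f k" "adj E src tgt a x"
    using x0 by blast
  let ?g = "f(Suc k := insert x (f k))"
  have eq: "V - insert x (f k) = V - f k - {x}" by blast
  have cut2: "AB_cut V E src tgt vA vB (insert x (f k)) (V - insert x (f k))"
    unfolding AB_cut_def eq using x AV vAk vBk vB Bx conn_insert[OF Ac x(3) x(4)] by auto
  have "card (insert x (f k)) = Suc k" using x f(4) finite_subset[OF AV finV] by simp
  moreover have "\<forall>i<Suc k. ?g i \<subset> ?g (Suc i)"
    using f(2) x by (auto simp: less_Suc_eq)
  moreover have "\<forall>p. 1 \<le> p \<and> p \<le> Suc k \<longrightarrow> AB_cut V E src tgt vA vB (?g p) (V - ?g p)"
    using f(3) cut2 by (auto simp: le_Suc_eq)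
  ultimately show ?case using f(1) by (intro exI[of _ ?g]) auto
qed

end

theorem lemma1:
  fixes V :: "'v set" and E :: "'e set" and src tgt :: "'e \<Rightarrow> 'v" and vA vB :: 'v
  assumes "multigraph V E src tgt"
    and "connected_set E src tgt V"
    and "card V \<ge> 2"
    and "vA \<in> V" and "vB \<in> V" and "vA \<noteq> vB"
    and "degree E src tgt vA = 3" and "degree E src tgt vB = 3"
    and "\<forall>v\<in>V - {vA, vB}. degree E src tgt v = 4"
    and "\<not> (\<exists>S \<subseteq> V. generalized_tadpole E src tgt vA vB S)"
  shows "\<exists>A. exhausting_sequence_of_cuts V E src tgt vA vB A"
proof -
  interpret phi4 V E src tgt vA vB
    unfolding phi4_def using assms by blast
  let ?n = "card V"
  have h: "1 \<le> ?n - 1" using assms(3) by linarith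
  obtain f where f: "f 0 = {}" "\<forall>i<?n - 1. f i \<subset> f (Suc i)"
    "\<forall>p. 1 \<le> p \<and> p \<le> ?n - 1 \<longrightarrow> AB_cut V E src tgt vA vB (f p) (V - f p)" "card (f (?n - 1)) = ?n - 1"
    using seq[OF h order.refl] by blast
  let ?A = "f(?n := V)"
  have last: "f (?n - 1) \<subset> V"
  proof -
    have "AB_cut V E src tgt vA vB (f (?n - 1)) (V - f (?n - 1))" using f(3) assms(3) by auto
    then have "f (?n - 1) \<subseteq> V" unfolding AB_cut_def by auto
    moreover have "f (?n - 1) \<noteq> V" using f(4) assms(3) by auto
    ultimately show ?thesis by blast
  qed
  have "\<forall>i<?n. ?A i \<subset> ?A (Suc i)"
  proof (intro allI impI)
    fix i assume i: "i < ?n"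
    show "?A i \<subset> ?A (Suc i)"
    proof (cases "Suc i = ?n")
      case True
      then have "i = ?n - 1" by simp
      then show ?thesis using True last by simp
    next
      case False
      then show ?thesis using f(2) i by auto
    qed
  qed
  moreover have "?A 0 = {}" using f(1) assms(3) by simp
  moreover have "\<forall>p. 1 \<le> p \<and> p \<le> ?n - 1 \<longrightarrow> AB_cut V E src tgt vA vB (?A p) (V - ?A p)"
    using f(3) assms(3) by auto
  ultimately show ?thesis unfolding exhausting_sequence_of_cuts_def by (intro exI[of _ ?A]) simp
qed

end
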